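(* Let $G$ be a graph, $k,d$ integers, $X$ a minimum vertex cover of $G$ that is also an independent set of $G$, $Y=V(G)\setminus X$, and $X_L,X_R$ disjoint subsets of $X$. Then $((G,k,d),X,\langle X_L,X_R\rangle)$ is a Yes-instance of \textsc{Annotated Contraction(vc)} if and only if it is a Yes-instance of \textsc{Constrained MaxCut}.
   Context: All graphs are finite, simple and undirected. $\mathrm{rank}(H)$ is $|V(H)|$ minus the number of connected components of $H$; for $S\subseteq V(G)$, $\mathrm{rank}(S):=\mathrm{rank}(G[S])$; for an edge set $F$, $\mathrm{rank}(F):=\mathrm{rank}(G[V(F)])$ where $V(F)$ is the set of endpoints of $F$. For $S_1,S_2\subseteq V(G)$, $E(S_1,S_2)$ is the set of edges with one endpoint in $S_1$ and the other in $S_2$. The instance is a Yes-instance of \textsc{Annotated Contraction(vc)} iff there exist $X_s\subseteq X$ and $Y_s\subseteq Y$ with (i) $(X\setminus X_s)\cup Y_s$ is a vertex cover of $G$, (ii) $\mathrm{rank}((X\setminus X_s)\cup Y_s)\ge k$, (iii) $|Y_s|-|X_s|\le k-d$, (iv) $X_L\cap X_s=\emptyset$ and $X_R\subseteq X_s$. It is a Yes-instance of \textsc{Constrained MaxCut} iff there exists a partition $\langle V_L,V_R\rangle$ of $V(G)$ with (i) $E(V_L\cap Y,V_R\cap X)=\emptyset$, (ii) $\mathrm{rank}(E(V_L\cap X,V_R\cap Y))\ge k$, (iii) $|V_R\cap Y|-|V_R\cap X|\le k-d$, (iv) $X_L\subseteq V_L$ and $X_R\subseteq V_R$. *)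

theory Defs
  imports Main
begin

definition graph :: "'a set \<Rightarrow> 'a set set \<Rightarrow> bool" where
  "graph V E \<longleftrightarrow> finite V \<and> (\<forall>e\<in>E. e \<subseteq> V \<and> card e = 2)"

definition adj_in :: "'a set set \<Rightarrow> 'a set \<Rightarrow> ('a \<times> 'a) set" where
  "adj_in E S = {(u, v). u \<in> S \<and> v \<in> S \<and> {u, v} \<in> E}"

definition conn_in :: "'a set set \<Rightarrow> 'a set \<Rightarrow> ('a \<times> 'a) set" where
  "conn_in E S = {(u, v). u \<in> S \<and> v \<in> S \<and> (u, v) \<in> (adj_in E S)\<^sup>*}"

definition num_components :: "'a set set \<Rightarrow> 'a set \<Rightarrow> nat" where
  "num_components E S = card (S // conn_in E S)"

definition rank_set :: "'a set set \<Rightarrow> 'a set \<Rightarrow> nat" where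
  "rank_set E S = card S - num_components E S"

definition rank_edges :: "'a set set \<Rightarrow> 'a set set \<Rightarrow> nat" where
  "rank_edges E F = rank_set E (\<Union>F)"

definition vertex_cover :: "'a set \<Rightarrow> 'a set set \<Rightarrow> 'a set \<Rightarrow> bool" where
  "vertex_cover V E C \<longleftrightarrow> C \<subseteq> V \<and> (\<forall>e\<in>E. e \<inter> C \<noteq> {})"

definition min_vertex_cover :: "'a set \<Rightarrow> 'a set set \<Rightarrow> 'a set \<Rightarrow> bool" where
  "min_vertex_cover V E C \<longleftrightarrow> vertex_cover V E C \<and>
     (\<forall>C'. vertex_cover V E C' \<longrightarrow> card C \<le> card C')"

definition independent_set :: "'a set \<Rightarrow> 'a set set \<Rightarrow> 'a set \<Rightarrow> bool" where
  "independent_set V E S \<longleftrightarrow> S \<subseteq> V \<and> (\<forall>e\<in>E. \<not> e \<subseteq> S)"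

definition edges_between :: "'a set set \<Rightarrow> 'a set \<Rightarrow> 'a set \<Rightarrow> 'a set set" where
  "edges_between E S1 S2 = {e \<in> E. \<exists>u v. e = {u, v} \<and> u \<in> S1 \<and> v \<in> S2}"

definition annotated_contraction_vc ::
  "'a set \<Rightarrow> 'a set set \<Rightarrow> int \<Rightarrow> int \<Rightarrow> 'a set \<Rightarrow> 'a set \<Rightarrow> 'a set \<Rightarrow> bool" where
  "annotated_contraction_vc V E k d X XL XR \<longleftrightarrow>
     (\<exists>Xs Ys. Xs \<subseteq> X \<and> Ys \<subseteq> V - X \<and>
        vertex_cover V E ((X - Xs) \<union> Ys) \<and>
        int (rank_set E ((X - Xs) \<union> Ys)) \<ge> k \<and>
        int (card Ys) - int (card Xs) \<le> k - d \<and>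
        XL \<inter> Xs = {} \<and> XR \<subseteq> Xs)"

definition constrained_maxcut ::
  "'a set \<Rightarrow> 'a set set \<Rightarrow> int \<Rightarrow> int \<Rightarrow> 'a set \<Rightarrow> 'a set \<Rightarrow> 'a set \<Rightarrow> bool" where
  "constrained_maxcut V E k d X XL XR \<longleftrightarrow>
     (\<exists>VL VR. VL \<union> VR = V \<and> VL \<inter> VR = {} \<and>
        edges_between E (VL \<inter> (V - X)) (VR \<inter> X) = {} \<and>
        int (rank_edges E (edges_between E (VL \<inter> X) (VR \<inter> (V - X)))) \<ge> k \<and>
        int (card (VR \<inter> (V - X))) - int (card (VR \<inter> X)) \<le> k - d \<and>
        XL \<subseteq> VL \<and> XR \<subseteq> VR)"

end

theory Submission
  imports Defs
begin

lemma rank_iso: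
  assumes fin: "finite S" and E2: "\<forall>e\<in>E. card e = 2"
    and S'def: "S' = {v\<in>S. \<exists>u\<in>S. {u,v}\<in>E}"
  shows "rank_set E S = rank_set E S'"
proof -
  have S'S: "S' \<subseteq> S" using S'def by auto
  have adj: "adj_in E S = adj_in E S'"
    unfolding adj_in_def S'def by (auto, metis insert_commute)
  have adjS: "(a,b) \<in> adj_in E S \<Longrightarrow> a \<in> S' \<and> b \<in> S'" for a b
    unfolding adj_in_def S'def by (auto, metis insert_commute)
  have rt_sub: "(x,y) \<in> (adj_in E S)\<^sup>* \<Longrightarrow> x = y \<or> y \<in> S'" for x y
    by (induction rule: rtrancl_induct) (auto dest: adjS)
  have rt_iso: "(x,y) \<in> (adj_in E S)\<^sup>* \<Longrightarrow> x \<notin> S' \<Longrightarrow> y = x" for x y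
    by (erule converse_rtranclE) (auto dest: adjS)
  have c1: "conn_in E S `` {x} = conn_in E S' `` {x}" if "x \<in> S'" for x
    using that rt_sub S'S unfolding conn_in_def adj by auto
  have c2: "conn_in E S `` {x} = {x}" if "x \<in> S - S'" for x
    using that rt_iso unfolding conn_in_def by auto
  have q: "S // conn_in E S = S' // conn_in E S' \<union> (\<lambda>x. {x}) ` (S - S')"
  proof -
    have "S = S' \<union> (S - S')" using S'S by auto
    hence "S // conn_in E S = (\<lambda>x. conn_in E S `` {x}) ` S' \<union> (\<lambda>x. conn_in E S `` {x}) ` (S - S')"
      unfolding quotient_def by auto
    also have "\<dots> = S' // conn_in E S' \<union> (\<lambda>x. {x}) ` (S - S')"
    proof -
      have "(\<lambda>x. conn_in E S `` {x}) ` S' = (\<lambda>x. conn_in E S' `` {x}) ` S'"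
        using c1 by (rule image_cong[OF refl])
      moreover have "(\<lambda>x. conn_in E S `` {x}) ` (S - S') = (\<lambda>x. {x}) ` (S - S')"
        using c2 by (rule image_cong[OF refl])
      ultimately show ?thesis unfolding quotient_def by (simp add: UNION_singleton_eq_range)
    qed
    finally show ?thesis .
  qed
  have sub: "A \<subseteq> S'" if "A \<in> S' // conn_in E S'" for A
    using that unfolding quotient_def conn_in_def by auto
  have disj: "S' // conn_in E S' \<inter> (\<lambda>x. {x}) ` (S - S') = {}"
    using sub by blast
  have fq: "finite S'" using fin S'S finite_subset by blast
  have fin1': "finite (S' // conn_in E S')"
    unfolding quotient_def using fq by simp
  have "card (S // conn_in E S) = card (S' // conn_in E S') + card (S - S')"
    unfolding q using fin fin1' disj by (simp add: card_Un_disjoint card_image)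
  moreover have "card S = card S' + card (S - S')"
    using fin S'S by (metis card_Diff_subset card_mono add_diff_inverse_nat not_less fq)
  ultimately show ?thesis
    unfolding rank_set_def num_components_def by simp
qed

lemma edge_prop:
  assumes "graph V E" "vertex_cover V E X" "independent_set V E X" "{u,v} \<in> E"
  shows "(u\<in>X \<and> v\<in>V-X) \<or> (v\<in>X \<and> u\<in>V-X)"
proof -
  have "card {u,v} = 2" "{u,v} \<subseteq> V" using assms(1,4) unfolding graph_def by auto
  hence "u \<noteq> v" by (cases "u = v") auto
  moreover have "{u,v} \<inter> X \<noteq> {}" using assms(2,4) unfolding vertex_cover_def by auto
  moreover have "\<not> {u,v} \<subseteq> X" using assms(3,4) unfolding independent_set_def by auto
  ultimately show ?thesis using \<open>{u,v} \<subseteq> V\<close> by auto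
qed

lemma edge_ex:
  assumes "graph V E" "e \<in> E"
  shows "\<exists>u v. e = {u,v}"
  using assms unfolding graph_def by (metis card_2_iff)

lemma key:
  assumes g: "graph V E" and vc: "vertex_cover V E X" and ind: "independent_set V E X"
    and VLR: "VL \<union> VR = V" "VL \<inter> VR = {}"
    and C: "C = (VL \<inter> X) \<union> (VR \<inter> (V - X))"
  shows "vertex_cover V E C \<longleftrightarrow> edges_between E (VL \<inter> (V - X)) (VR \<inter> X) = {}"
    and "rank_set E C = rank_edges E (edges_between E (VL \<inter> X) (VR \<inter> (V - X)))"
proof -
  have XV: "X \<subseteq> V" using vc unfolding vertex_cover_def by auto
  have CV: "C \<subseteq> V" using C VLR XV by auto
  have ep: "{u,v} \<in> E \<Longrightarrow> (u\<in>X \<and> v\<in>V-X) \<or> (v\<in>X \<and> u\<in>V-X)" for u v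
    using edge_prop[OF g vc ind] by blast
  show "vertex_cover V E C \<longleftrightarrow> edges_between E (VL \<inter> (V - X)) (VR \<inter> X) = {}"
  proof
    assume a: "vertex_cover V E C"
    show "edges_between E (VL \<inter> (V - X)) (VR \<inter> X) = {}"
    proof (rule ccontr)
      assume "edges_between E (VL \<inter> (V - X)) (VR \<inter> X) \<noteq> {}"
      then obtain u v where "{u,v} \<in> E" "u \<in> VL \<inter> (V - X)" "v \<in> VR \<inter> X"
        unfolding edges_between_def by auto
      moreover have "{u,v} \<inter> C \<noteq> {}" using a calculation unfolding vertex_cover_def by auto
      ultimately show False using C VLR by auto
    qed
  next
    assume a: "edges_between E (VL \<inter> (V - X)) (VR \<inter> X) = {}"
    have "e \<inter> C \<noteq> {}" if e: "e \<in> E" for e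
    proof -
      obtain u v where uv: "e = {u,v}" using edge_ex[OF g e] by blast
      have h: "e \<inter> C \<noteq> {}" if "e = {x,y}" "x \<in> X" "y \<in> V - X" for x y
      proof (rule ccontr)
        assume n: "\<not> e \<inter> C \<noteq> {}"
        hence "x \<in> VR" "y \<in> VL" using that C VLR XV by auto
        moreover have "e = {y,x}" using that(1) by (simp add: insert_commute)
        ultimately have "e \<in> edges_between E (VL \<inter> (V - X)) (VR \<inter> X)"
          unfolding edges_between_def using that \<open>e \<in> E\<close> by blast
        thus False using a by auto
      qed
      have e2: "e = {v,u}" using uv by (simp add: insert_commute)
      from ep[of u v] e uv consider "u \<in> X \<and> v \<in> V - X" | "v \<in> X \<and> u \<in> V - X" by blast
      then show ?thesis
      proof cases
        case 1 then show ?thesis using h[of u v] uv by blast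
      next
        case 2 then show ?thesis using h[of v u] e2 by blast
      qed
    qed
    thus "vertex_cover V E C" using CV unfolding vertex_cover_def by auto
  qed
  have finV: "finite V" using g unfolding graph_def by simp
  have fin: "finite C" using finite_subset[OF CV finV] .
  have E2: "\<forall>e\<in>E. card e = 2" using g unfolding graph_def by auto
  have U: "\<Union>(edges_between E (VL \<inter> X) (VR \<inter> (V - X))) = {v\<in>C. \<exists>u\<in>C. {u,v}\<in>E}"
  proof
    show "\<Union>(edges_between E (VL \<inter> X) (VR \<inter> (V - X))) \<subseteq> {v\<in>C. \<exists>u\<in>C. {u,v}\<in>E}"
    proof
      fix w assume "w \<in> \<Union>(edges_between E (VL \<inter> X) (VR \<inter> (V - X)))"
      then obtain a b where ab: "{a,b} \<in> E" "a \<in> VL \<inter> X" "b \<in> VR \<inter> (V - X)" "w \<in> {a,b}"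
        unfolding edges_between_def by blast
      have "a \<in> C" "b \<in> C" using ab C by auto
      moreover have "{b,a} \<in> E" using ab(1) by (simp add: insert_commute)
      ultimately show "w \<in> {v\<in>C. \<exists>u\<in>C. {u,v}\<in>E}" using ab by blast
    qed
  next
    show "{v\<in>C. \<exists>u\<in>C. {u,v}\<in>E} \<subseteq> \<Union>(edges_between E (VL \<inter> X) (VR \<inter> (V - X)))"
    proof clarify
      fix v u assume vC: "v \<in> C" and uC: "u \<in> C" and e: "{u,v} \<in> E"
      from ep[OF e] show "v \<in> \<Union>(edges_between E (VL \<inter> X) (VR \<inter> (V - X)))"
      proof
        assume "u \<in> X \<and> v \<in> V - X"
        hence "u \<in> VL \<inter> X" "v \<in> VR \<inter> (V - X)" using uC vC C by auto
        thus ?thesis using e unfolding edges_between_def by blast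
      next
        assume "v \<in> X \<and> u \<in> V - X"
        hence "v \<in> VL \<inter> X" "u \<in> VR \<inter> (V - X)" using uC vC C by auto
        moreover have "{v,u} \<in> E" using e by (simp add: insert_commute)
        ultimately show ?thesis unfolding edges_between_def by blast
      qed
    qed
  qed
  show "rank_set E C = rank_edges E (edges_between E (VL \<inter> X) (VR \<inter> (V - X)))"
    unfolding rank_edges_def U using rank_iso[OF fin E2 refl] .
qed

theorem lemma15:
  fixes V :: "'a set" and E :: "'a set set" and k d :: int and X XL XR :: "'a set"
  assumes "graph V E"
    and "min_vertex_cover V E X"
    and "independent_set V E X"
    and "XL \<subseteq> X" and "XR \<subseteq> X" and "XL \<inter> XR = {}"
  shows "annotated_contraction_vc V E k d X XL XR \<longleftrightarrow> constrained_maxcut V E k d X XL XR"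
proof -
  have vc: "vertex_cover V E X" using assms(2) unfolding min_vertex_cover_def by auto
  have XV: "X \<subseteq> V" using vc unfolding vertex_cover_def by auto
  note K = key[OF assms(1) vc assms(3)]
  show ?thesis
  proof
    assume "annotated_contraction_vc V E k d X XL XR"
    then obtain Xs Ys where h: "Xs \<subseteq> X" "Ys \<subseteq> V - X"
        "vertex_cover V E ((X - Xs) \<union> Ys)"
        "int (rank_set E ((X - Xs) \<union> Ys)) \<ge> k"
        "int (card Ys) - int (card Xs) \<le> k - d"
        "XL \<inter> Xs = {}" "XR \<subseteq> Xs"
      unfolding annotated_contraction_vc_def by blast
    define VR where "VR = Xs \<union> Ys"
    define VL where "VL = V - VR"
    have l: "VL \<union> VR = V" "VL \<inter> VR = {}" using h(1,2) XV unfolding VL_def VR_def by auto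
    have Ceq: "(X - Xs) \<union> Ys = (VL \<inter> X) \<union> (VR \<inter> (V - X))"
      using h(1,2) XV unfolding VL_def VR_def by blast
    have r1: "VR \<inter> X = Xs" "VR \<inter> (V - X) = Ys" using h(1,2) XV unfolding VR_def by auto
    have c1: "edges_between E (VL \<inter> (V - X)) (VR \<inter> X) = {}"
      by (rule iffD1[OF K(1)[OF l Ceq] h(3)])
    have c2: "int (rank_edges E (edges_between E (VL \<inter> X) (VR \<inter> (V - X)))) \<ge> k"
      using h(4) unfolding K(2)[OF l Ceq] .
    have c3: "int (card (VR \<inter> (V - X))) - int (card (VR \<inter> X)) \<le> k - d"
      using h(5) unfolding r1 .
    have c4: "XL \<subseteq> VL" using h(2,6) assms(4) XV unfolding VL_def VR_def by blast
    have c5: "XR \<subseteq> VR" using h(7) unfolding VR_def by blast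
    show "constrained_maxcut V E k d X XL XR"
      unfolding constrained_maxcut_def
      apply (rule exI[of _ VL], rule exI[of _ VR])
      using l c1 c2 c3 c4 c5 by blast
  next
    assume "constrained_maxcut V E k d X XL XR"
    then obtain VL VR where h: "VL \<union> VR = V" "VL \<inter> VR = {}"
        "edges_between E (VL \<inter> (V - X)) (VR \<inter> X) = {}"
        "int (rank_edges E (edges_between E (VL \<inter> X) (VR \<inter> (V - X)))) \<ge> k"
        "int (card (VR \<inter> (V - X))) - int (card (VR \<inter> X)) \<le> k - d"
        "XL \<subseteq> VL" "XR \<subseteq> VR"
      unfolding constrained_maxcut_def by blast
    have Ceq: "(X - VR \<inter> X) \<union> VR \<inter> (V - X) = (VL \<inter> X) \<union> (VR \<inter> (V - X))"
      using h(1,2) XV by blast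
    have c1: "vertex_cover V E ((X - VR \<inter> X) \<union> VR \<inter> (V - X))"
      by (rule iffD2[OF K(1)[OF h(1,2) Ceq] h(3)])
    have c2: "int (rank_set E ((X - VR \<inter> X) \<union> VR \<inter> (V - X))) \<ge> k"
      using h(4) unfolding K(2)[OF h(1,2) Ceq] .
    have c3: "XL \<inter> (VR \<inter> X) = {}" using h(2,6) by blast
    have c4: "XR \<subseteq> VR \<inter> X" using h(7) assms(5) by blast
    show "annotated_contraction_vc V E k d X XL XR"
      unfolding annotated_contraction_vc_def
      apply (rule exI[of _ "VR \<inter> X"], rule exI[of _ "VR \<inter> (V - X)"])
      using c1 c2 c3 c4 h(5) by blast
  qed
qed

end
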